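(* Let $(\Xi,d_\Xi)$ be a metric space, let $\{P^\nu\}_{\nu\in\mathbb{N}}$ be probabilities on $(\Xi,\mathcal{B}(\Xi))$ converging weakly to a probability $P$, and let $\{h^\nu\}_{\nu\in\mathbb{N}}$ be measurable $\overline{\mathbb{R}}$-valued functions on $\Xi$ such that $$\liminf_{K\to+\infty}\ \liminf_{\nu\to+\infty}\mathbb{E}^{P^\nu}\big[h^\nu(\xi)\,\mathbb{1}\{\xi:h^\nu(\xi)\le -K\}\big]=0.$$ Then either $\liminf_{\nu\to+\infty}\mathbb{E}^{P^\nu}[h^\nu(\xi)]=+\infty$ or $$\mathbb{E}^{P}\Big[\Big(\liminf_{(\nu,\zeta)\to(+\infty,\xi)}h^\nu(\zeta)\Big)_+\Big]<+\infty.$$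
   Context: $\overline{\mathbb{R}}=\mathbb{R}\cup\{-\infty,+\infty\}$; $a_+=\max\{a,0\}$, $a_-=-\min\{a,0\}$. Weak convergence means $\int\varphi\,dP^\nu\to\int\varphi\,dP$ for all bounded continuous $\varphi$. For a probability $\mu$ and measurable $\overline{\mathbb{R}}$-valued $g$, $\mathbb{E}^\mu[g]:=\int g_+\,d\mu-\int g_-\,d\mu$ with conventions $+\infty-\alpha=+\infty$ for all $\alpha\in\overline{\mathbb{R}}$ and $\beta-(+\infty)=-\infty$ for $\beta\in\mathbb{R}$. $\mathbb{1}\{B\}$ is the indicator of $B$. $\liminf_{(\nu,\zeta)\to(+\infty,\xi)}h^\nu(\zeta):=\lim_{\delta\downarrow0}\lim_{N\to\infty}\inf\{h^\nu(\zeta):\nu\ge N,\ d_\Xi(\zeta,\xi)<\delta\}$. *)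

theory Defs
  imports "HOL-Probability.Probability"
begin

text \<open>Extended expectation: E^mu[g] = int g_+ dmu - int g_- dmu, with
  +inf - a = +inf and b - (+inf) = -inf for finite b.  Note e2ennreal (g x) = g_+(x).\<close>
definition ext_expect :: "'a measure \<Rightarrow> ('a \<Rightarrow> ereal) \<Rightarrow> ereal" where
  "ext_expect \<mu> g =
     (let a = enn2ereal (\<integral>\<^sup>+ x. e2ennreal (g x) \<partial>\<mu>);
          b = enn2ereal (\<integral>\<^sup>+ x. e2ennreal (- g x) \<partial>\<mu>)
      in if a = \<infinity> then \<infinity> else a - b)"

definition weak_conv_metric :: "(nat \<Rightarrow> 'a::metric_space measure) \<Rightarrow> 'a measure \<Rightarrow> bool" where
  "weak_conv_metric Pn P \<longleftrightarrow>
     (\<forall>\<phi> :: 'a \<Rightarrow> real. continuous_on UNIV \<phi> \<and> bounded (range \<phi>) \<longrightarrow>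
        (\<lambda>n. integral\<^sup>L (Pn n) \<phi>) \<longlonglongrightarrow> integral\<^sup>L P \<phi>)"

text \<open>liminf_{(nu,zeta) -> (+inf, xi)} h^nu(zeta)
  = lim_{delta down 0} lim_{N->inf} inf { h^nu(zeta) : nu >= N, d(zeta,xi) < delta }.\<close>
definition epi_liminf :: "(nat \<Rightarrow> 'a::metric_space \<Rightarrow> ereal) \<Rightarrow> 'a \<Rightarrow> ereal" where
  "epi_liminf h \<xi> =
     Lim (at_right (0::real))
       (\<lambda>\<delta>. lim (\<lambda>N. Inf {h \<nu> \<zeta> | \<nu> \<zeta>. \<nu> \<ge> N \<and> dist \<zeta> \<xi> < \<delta>}))"

end

theory Submission
  imports Defs
begin


lemma epi_liminf_gt:
  fixes h :: "nat \<Rightarrow> 'a::metric_space \<Rightarrow> ereal"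
  assumes "a < epi_liminf h \<xi>"
  shows "\<exists>\<delta>>0. \<exists>N. \<forall>\<nu>\<ge>N. \<forall>\<zeta>. dist \<zeta> \<xi> < \<delta> \<longrightarrow> a < h \<nu> \<zeta>"
proof -
  define W where "W \<delta> N = Inf {h \<nu> \<zeta> | \<nu> \<zeta>. \<nu> \<ge> N \<and> dist \<zeta> \<xi> < \<delta>}" for \<delta> :: real and N :: nat
  define V where "V \<delta> = (SUP N. W \<delta> N)" for \<delta>
  have incW: "incseq (W \<delta>)" for \<delta>
    unfolding incseq_def W_def apply (intro allI impI Inf_superset_mono) apply clarsimp by (metis order_trans)
  have limW: "lim (W \<delta>) = V \<delta>" for \<delta>
    unfolding V_def by (rule limI, rule LIMSEQ_SUP[OF incW])
  have antiV: "V \<delta>' \<le> V \<delta>" if "\<delta> \<le> \<delta>'" for \<delta> \<delta>'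
    unfolding V_def W_def using that
    apply (auto intro!: SUP_mono' Inf_superset_mono)
    subgoal for N \<nu> \<zeta> by (rule exI[of _ \<nu>], rule exI[of _ \<zeta>]) auto
    done
  define S where "S = (SUP \<delta>\<in>{0<..}. V \<delta>)"
  have "(V \<longlongrightarrow> S) (at_right 0)"
  proof (rule order_tendstoI)
    fix y assume "y < S"
    then obtain \<delta>0 where d0: "\<delta>0 > 0" "y < V \<delta>0" unfolding S_def by (auto simp: less_SUP_iff)
    show "\<forall>\<^sub>F x in at_right 0. y < V x"
      unfolding eventually_at_right_field using d0 antiV
      by (metis less_le_trans less_le)
  next
    fix y assume "S < y"
    have Vy: "V x < y" if "0 < x" for x
    proof -
      have "V x \<le> S" unfolding S_def using that by (intro SUP_upper) simp
      then show ?thesis using \<open>S < y\<close> by (rule le_less_trans)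
    qed
    show "\<forall>\<^sub>F x in at_right 0. V x < y"
      by (rule eventually_mono[OF eventually_at_right_less[of "0::real"]]) (rule Vy)
  qed
  moreover have "(\<lambda>\<delta>. lim (\<lambda>N. Inf {h \<nu> \<zeta> | \<nu> \<zeta>. \<nu> \<ge> N \<and> dist \<zeta> \<xi> < \<delta>})) = V"
    using limW unfolding W_def[abs_def] by (intro ext) simp
  ultimately have "epi_liminf h \<xi> = S"
    unfolding epi_liminf_def by (simp add: tendsto_Lim)
  with assms obtain \<delta> where d: "\<delta> > 0" "a < V \<delta>" unfolding S_def by (auto simp: less_SUP_iff)
  then obtain N where "a < W \<delta> N" unfolding V_def by (auto simp: less_SUP_iff)
  have "a < h \<nu> \<zeta>" if "\<nu> \<ge> N" "dist \<zeta> \<xi> < \<delta>" for \<nu> \<zeta>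
  proof -
    have "W \<delta> N \<le> h \<nu> \<zeta>" unfolding W_def using that by (intro Inf_lower) blast
    then show ?thesis using \<open>a < W \<delta> N\<close> by (rule less_le_trans[rotated])
  qed
  then have "\<forall>\<nu>\<ge>N. \<forall>\<zeta>. dist \<zeta> \<xi> < \<delta> \<longrightarrow> a < h \<nu> \<zeta>" by blast
  with d show ?thesis by blast
qed


definition qq :: "(nat \<Rightarrow> 'a \<Rightarrow> ereal) \<Rightarrow> nat \<Rightarrow> nat \<Rightarrow> 'a \<Rightarrow> real" where
  "qq h k \<nu> \<zeta> = real_of_ereal (min (max (h \<nu> \<zeta>) 0) (ereal (real k)))"

definition FF :: "(nat \<Rightarrow> 'a::metric_space \<Rightarrow> ereal) \<Rightarrow> nat \<Rightarrow> 'a \<Rightarrow> real" where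
  "FF h k \<xi> = Inf {qq h k \<nu> \<zeta> + real k * dist \<zeta> \<xi> | \<nu> \<zeta>. k \<le> \<nu>}"

lemma qq_eq: "ereal (qq h k \<nu> \<zeta>) = min (max (h \<nu> \<zeta>) 0) (ereal (real k))"
  unfolding qq_def by (cases "h \<nu> \<zeta>") (auto simp: min_def max_def)

lemma qq_nonneg: "0 \<le> qq h k \<nu> \<zeta>"
  using qq_eq[of h k \<nu> \<zeta>] by (metis ereal_less_eq(5) max.cobounded2 min.bounded_iff of_nat_0_le_iff)

lemma qq_le_k: "qq h k \<nu> \<zeta> \<le> real k"
  using qq_eq[of h k \<nu> \<zeta>] by (metis ereal_less_eq(3) min.cobounded2)

lemma qq_le_h: "ennreal (qq h k \<nu> \<zeta>) \<le> e2ennreal (h \<nu> \<zeta>)"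
proof -
  have "ennreal (qq h k \<nu> \<zeta>) = e2ennreal (ereal (qq h k \<nu> \<zeta>))" by simp
  also have "\<dots> \<le> e2ennreal (max (h \<nu> \<zeta>) 0)" unfolding qq_eq by (intro e2ennreal_mono) simp
  also have "\<dots> = e2ennreal (h \<nu> \<zeta>)" by (simp add: e2ennreal_def max.commute)
  finally show ?thesis .
qed

lemma qq_ge: assumes "0 < a" "a \<le> real k" "ereal a < h \<nu> \<zeta>" shows "a \<le> qq h k \<nu> \<zeta>"
proof -
  have "0 < ereal a" using assms(1) by simp
  then have h0: "0 < h \<nu> \<zeta>" using assms(3) by (rule less_trans)
  then have "max (h \<nu> \<zeta>) 0 = h \<nu> \<zeta>" by simp
  moreover have "ereal a \<le> h \<nu> \<zeta>" using assms(3) by simp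
  moreover have "ereal a \<le> ereal (real k)" using assms(2) by simp
  ultimately have "ereal a \<le> min (max (h \<nu> \<zeta>) 0) (ereal (real k))" by simp
  then show ?thesis unfolding qq_eq[symmetric] by simp
qed

lemma FF_set_ne: "{qq h k \<nu> \<zeta> + real k * dist \<zeta> \<xi> | \<nu> \<zeta>. k \<le> \<nu>} \<noteq> {}" by blast

lemma FF_set_bdd: "bdd_below {qq h k \<nu> \<zeta> + real k * dist \<zeta> \<xi> | \<nu> \<zeta>. k \<le> \<nu>}"
  by (rule bdd_belowI[of _ 0]) (auto intro!: add_nonneg_nonneg qq_nonneg)

lemma FF_nonneg: "0 \<le> FF h k \<xi>"
  unfolding FF_def by (rule cInf_greatest[OF FF_set_ne]) (auto intro!: add_nonneg_nonneg qq_nonneg)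

lemma FF_le_qq: assumes "k \<le> \<nu>" shows "FF h k \<xi> \<le> qq h k \<nu> \<xi>"
proof -
  have "FF h k \<xi> \<le> qq h k \<nu> \<xi> + real k * dist \<xi> \<xi>"
    unfolding FF_def using assms by (intro cInf_lower[OF _ FF_set_bdd]) blast
  then show ?thesis by simp
qed

lemma FF_le_k: "FF h k \<xi> \<le> real k"
  using FF_le_qq[of k k h \<xi>] qq_le_k[of h k k \<xi>] by simp

lemma FF_le_h: assumes "k \<le> \<nu>" shows "ennreal (FF h k \<xi>) \<le> e2ennreal (h \<nu> \<xi>)"
  using FF_le_qq[OF assms, of h \<xi>] qq_le_h[of h k \<nu> \<xi>] by (meson ennreal_leI order_trans)

lemma FF_lip: "FF h k \<xi> \<le> FF h k \<xi>' + real k * dist \<xi> \<xi>'"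
proof -
  have "FF h k \<xi> - real k * dist \<xi> \<xi>' \<le> FF h k \<xi>'"
    unfolding FF_def[of h k \<xi>']
  proof (rule cInf_greatest[OF FF_set_ne])
    fix x assume "x \<in> {qq h k \<nu> \<zeta> + real k * dist \<zeta> \<xi>' | \<nu> \<zeta>. k \<le> \<nu>}"
    then obtain \<nu> \<zeta> where x: "x = qq h k \<nu> \<zeta> + real k * dist \<zeta> \<xi>'" "k \<le> \<nu>" by blast
    have "FF h k \<xi> \<le> qq h k \<nu> \<zeta> + real k * dist \<zeta> \<xi>"
      unfolding FF_def using x by (intro cInf_lower[OF _ FF_set_bdd]) blast
    also have "\<dots> \<le> qq h k \<nu> \<zeta> + real k * (dist \<zeta> \<xi>' + dist \<xi> \<xi>')"
      by (intro add_left_mono mult_left_mono) (auto simp: dist_triangle2)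
    finally show "FF h k \<xi> - real k * dist \<xi> \<xi>' \<le> x" using x by (simp add: algebra_simps)
  qed
  then show ?thesis by simp
qed

lemma FF_cont: "continuous_on UNIV (FF h k)"
proof (rule lipschitz_on_continuous_on)
  show "(real k)-lipschitz_on UNIV (FF h k)"
  proof (rule lipschitz_onI)
    fix x y :: 'a
    show "dist (FF h k x) (FF h k y) \<le> real k * dist x y"
      using FF_lip[of h k x y] FF_lip[of h k y x] by (simp add: dist_real_def dist_commute abs_le_iff)
  qed simp
qed

lemma FF_ge:
  assumes "0 < a" "a \<le> real k" "a \<le> real k * \<delta>"
    and "\<forall>\<nu>\<ge>k. \<forall>\<zeta>. dist \<zeta> \<xi> < \<delta> \<longrightarrow> ereal a < h \<nu> \<zeta>"
  shows "a \<le> FF h k \<xi>"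
  unfolding FF_def
proof (rule cInf_greatest[OF FF_set_ne])
  fix x assume "x \<in> {qq h k \<nu> \<zeta> + real k * dist \<zeta> \<xi> | \<nu> \<zeta>. k \<le> \<nu>}"
  then obtain \<nu> \<zeta> where x: "x = qq h k \<nu> \<zeta> + real k * dist \<zeta> \<xi>" "k \<le> \<nu>" by blast
  show "a \<le> x"
  proof (cases "dist \<zeta> \<xi> < \<delta>")
    case True
    then have "a \<le> qq h k \<nu> \<zeta>" using assms x by (intro qq_ge) auto
    moreover have "0 \<le> real k * dist \<zeta> \<xi>" by simp
    ultimately show ?thesis using x by linarith
  next
    case False
    then have "real k * \<delta> \<le> real k * dist \<zeta> \<xi>" by (intro mult_left_mono) auto
    then show ?thesis using x assms qq_nonneg[of h k \<nu> \<zeta>] by linarith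
  qed
qed

theorem lemma3p5:
  fixes Pn :: "nat \<Rightarrow> 'a::metric_space measure"
    and P :: "'a measure"
    and h :: "nat \<Rightarrow> 'a \<Rightarrow> ereal"
  assumes Pn_prob: "\<And>\<nu>. prob_space (Pn \<nu>)"
    and Pn_sets: "\<And>\<nu>. sets (Pn \<nu>) = sets borel"
    and P_prob: "prob_space P"
    and P_sets: "sets P = sets borel"
    and weak: "weak_conv_metric Pn P"
    and h_meas: "\<And>\<nu>. h \<nu> \<in> borel_measurable borel"
    and UI: "Liminf at_top (\<lambda>K::real. liminf (\<lambda>\<nu>.
               ext_expect (Pn \<nu>) (\<lambda>\<xi>. if h \<nu> \<xi> \<le> - ereal K then h \<nu> \<xi> else 0))) = 0"
  shows "liminf (\<lambda>\<nu>. ext_expect (Pn \<nu>) (h \<nu>)) = \<infinity>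
         \<or> ext_expect P (\<lambda>\<xi>. max (epi_liminf h \<xi>) 0) < \<infinity>"
proof (cases "liminf (\<lambda>\<nu>. ext_expect (Pn \<nu>) (h \<nu>)) = \<infinity>")
  case True
  then show ?thesis by simp
next
  case False
  note [measurable] = h_meas
  define A where "A \<nu> = (\<integral>\<^sup>+ \<xi>. e2ennreal (h \<nu> \<xi>) \<partial>Pn \<nu>)" for \<nu>
  define B where "B \<nu> = (\<integral>\<^sup>+ \<xi>. e2ennreal (- h \<nu> \<xi>) \<partial>Pn \<nu>)" for \<nu>
  have E_eq: "ext_expect (Pn \<nu>) (h \<nu>) = (if enn2ereal (A \<nu>) = \<infinity> then \<infinity> else enn2ereal (A \<nu>) - enn2ereal (B \<nu>))" for \<nu>
    unfolding ext_expect_def A_def B_def Let_def by simp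
  obtain c :: real where Lc: "liminf (\<lambda>\<nu>. ext_expect (Pn \<nu>) (h \<nu>)) < ereal c"
  proof (cases "liminf (\<lambda>\<nu>. ext_expect (Pn \<nu>) (h \<nu>))")
    case (real r) then show ?thesis using that[of "r + 1"] by simp
  next
    case PInf then show ?thesis using False by simp
  next
    case MInf then show ?thesis using that[of 0] by simp
  qed
  have freq1: "frequently (\<lambda>\<nu>. ext_expect (Pn \<nu>) (h \<nu>) < ereal c) sequentially"
  proof (rule ccontr)
    assume "\<not> ?thesis"
    then have "eventually (\<lambda>\<nu>. ereal c \<le> ext_expect (Pn \<nu>) (h \<nu>)) sequentially"
      by (simp add: not_frequently not_less)
    then have "ereal c \<le> liminf (\<lambda>\<nu>. ext_expect (Pn \<nu>) (h \<nu>))" by (rule Liminf_bounded)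
    with Lc show False by simp
  qed
  have "(-1::ereal) < Liminf at_top (\<lambda>K::real. liminf (\<lambda>\<nu>.
               ext_expect (Pn \<nu>) (\<lambda>\<xi>. if h \<nu> \<xi> \<le> - ereal K then h \<nu> \<xi> else 0)))"
    unfolding UI by simp
  from less_LiminfD[OF this] obtain K0 where K0: "\<And>K. K \<ge> K0 \<Longrightarrow> (-1::ereal) < liminf (\<lambda>\<nu>.
               ext_expect (Pn \<nu>) (\<lambda>\<xi>. if h \<nu> \<xi> \<le> - ereal K then h \<nu> \<xi> else 0))"
    unfolding eventually_at_top_linorder by blast
  define K where "K = max K0 0"
  have K0le: "K \<ge> 0" unfolding K_def by simp
  define \<phi> where "\<phi> \<nu> \<xi> = (if h \<nu> \<xi> \<le> - ereal K then h \<nu> \<xi> else 0)" for \<nu> \<xi>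
  have "(-1::ereal) < liminf (\<lambda>\<nu>. ext_expect (Pn \<nu>) (\<phi> \<nu>))"
    using K0[of K] unfolding K_def \<phi>_def by simp
  from less_LiminfD[OF this] obtain N1 where N1: "\<And>\<nu>. \<nu> \<ge> N1 \<Longrightarrow> (-1::ereal) < ext_expect (Pn \<nu>) (\<phi> \<nu>)"
    unfolding eventually_sequentially by blast
  have Bbound: "B \<nu> \<le> ennreal (K + 1)" if "\<nu> \<ge> N1" for \<nu>
  proof -
    interpret p: prob_space "Pn \<nu>" by (rule Pn_prob)
    have mphi: "(\<lambda>\<xi>. e2ennreal (- \<phi> \<nu> \<xi>)) \<in> borel_measurable (Pn \<nu>)"
      unfolding measurable_cong_sets[OF Pn_sets refl] \<phi>_def by measurable
    have phi_le: "\<phi> \<nu> \<xi> \<le> 0" for \<xi>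
      unfolding \<phi>_def using K0le by (auto intro: order_trans)
    have "(\<integral>\<^sup>+ \<xi>. e2ennreal (\<phi> \<nu> \<xi>) \<partial>Pn \<nu>) = 0"
      using phi_le by (simp add: e2ennreal_neg)
    then have "ext_expect (Pn \<nu>) (\<phi> \<nu>) = - enn2ereal (\<integral>\<^sup>+ \<xi>. e2ennreal (- \<phi> \<nu> \<xi>) \<partial>Pn \<nu>)"
      unfolding ext_expect_def Let_def by (simp add: zero_ennreal.rep_eq)
    with N1[OF that] have "enn2ereal (\<integral>\<^sup>+ \<xi>. e2ennreal (- \<phi> \<nu> \<xi>) \<partial>Pn \<nu>) < 1"
      by (simp add: ereal_uminus_less_reorder)
    then have Bphi: "(\<integral>\<^sup>+ \<xi>. e2ennreal (- \<phi> \<nu> \<xi>) \<partial>Pn \<nu>) < 1"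
      by (simp add: less_ennreal.rep_eq one_ennreal.rep_eq)
    have pw: "e2ennreal (- h \<nu> \<xi>) \<le> ennreal K + e2ennreal (- \<phi> \<nu> \<xi>)" for \<xi>
    proof (cases "h \<nu> \<xi> \<le> - ereal K")
      case True then show ?thesis unfolding \<phi>_def by simp
    next
      case False
      then have "- h \<nu> \<xi> \<le> ereal K" by (simp add: ereal_uminus_le_reorder)
      then have "e2ennreal (- h \<nu> \<xi>) \<le> ennreal K" using e2ennreal_mono by fastforce
      then show ?thesis by (simp add: add_increasing2)
    qed
    have "B \<nu> \<le> (\<integral>\<^sup>+ \<xi>. ennreal K + e2ennreal (- \<phi> \<nu> \<xi>) \<partial>Pn \<nu>)"
      unfolding B_def by (intro nn_integral_mono pw)
    also have "\<dots> = (\<integral>\<^sup>+ \<xi>. ennreal K \<partial>Pn \<nu>) + (\<integral>\<^sup>+ \<xi>. e2ennreal (- \<phi> \<nu> \<xi>) \<partial>Pn \<nu>)"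
      using mphi by (intro nn_integral_add) auto
    also have "\<dots> \<le> ennreal K + 1"
      using Bphi by (simp add: p.emeasure_space_1)
    finally show ?thesis using K0le by (simp add: ennreal_plus)
  qed
  define C where "C = \<bar>c\<bar> + K + 1"
  have C_nonneg: "0 \<le> C" unfolding C_def using K0le by simp
  have freqA: "frequently (\<lambda>\<nu>. A \<nu> \<le> ennreal C) sequentially"
  proof -
    have "frequently (\<lambda>\<nu>. \<nu> \<ge> N1 \<and> ext_expect (Pn \<nu>) (h \<nu>) < ereal c) sequentially"
      using frequently_eventually_conj[OF freq1 eventually_ge_at_top[of N1]] .
    then show ?thesis
    proof (rule frequently_elim1, elim conjE)
      fix \<nu> assume nu: "\<nu> \<ge> N1" and Ec: "ext_expect (Pn \<nu>) (h \<nu>) < ereal c"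
      have Bb: "B \<nu> \<le> ennreal (K + 1)" by (rule Bbound[OF nu])
      then obtain rb where rb: "0 \<le> rb" "B \<nu> = ennreal rb" "rb \<le> K + 1"
        by (cases "B \<nu>") (auto simp: K0le top_unique simp del: ennreal_plus)
      show "A \<nu> \<le> ennreal C"
      proof (cases "A \<nu>")
        case top
        then show ?thesis using Ec E_eq[of \<nu>] by simp
      next
        case (real ra)
        then have "ereal ra - ereal rb < ereal c" using Ec E_eq[of \<nu>] rb by simp
        then have "ra < c + rb" by simp
        then have "ra \<le> C" unfolding C_def using rb by simp
        then show ?thesis using real C_nonneg by simp
      qed
    qed
  qed
  have FFm: "FF h k \<in> borel_measurable borel" for k
    by (rule borel_measurable_continuous_onI[OF FF_cont])
  have FFk: "(\<integral>\<^sup>+ \<xi>. ennreal (FF h k \<xi>) \<partial>P) \<le> ennreal C" for k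
  proof -
    have integ: "integrable M (FF h k)" if "prob_space M" "sets M = sets borel" for M
    proof -
      interpret m: prob_space M by (rule that(1))
      show ?thesis
      proof (rule m.integrable_const_bound[where B="real k"])
        show "AE x in M. norm (FF h k x) \<le> real k"
          using FF_nonneg[of h k] FF_le_k[of h k] by (intro AE_I2) (simp add: abs_le_iff order_trans[of _ 0])
        show "FF h k \<in> borel_measurable M"
          unfolding measurable_cong_sets[OF that(2) refl] by (rule FFm)
      qed
    qed
    have nn: "(\<integral>\<^sup>+ \<xi>. ennreal (FF h k \<xi>) \<partial>M) = ennreal (integral\<^sup>L M (FF h k))"
      if "prob_space M" "sets M = sets borel" for M
      by (rule nn_integral_eq_integral[OF integ[OF that]]) (simp add: FF_nonneg)
    have bnd: "bounded (range (FF h k))"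
      unfolding bounded_real using FF_nonneg[of h k] FF_le_k[of h k] by (intro exI[of _ "real k"]) (auto simp: abs_le_iff order_trans[of _ 0])
    have lim: "(\<lambda>n. integral\<^sup>L (Pn n) (FF h k)) \<longlonglongrightarrow> integral\<^sup>L P (FF h k)"
      using weak FF_cont bnd unfolding weak_conv_metric_def by blast
    have freq2: "frequently (\<lambda>\<nu>. integral\<^sup>L (Pn \<nu>) (FF h k) \<le> C) sequentially"
    proof -
      have "frequently (\<lambda>\<nu>. \<nu> \<ge> k \<and> A \<nu> \<le> ennreal C) sequentially"
        using frequently_eventually_conj[OF freqA eventually_ge_at_top[of k]] .
      then show ?thesis
      proof (rule frequently_elim1, elim conjE)
        fix \<nu> assume nu: "\<nu> \<ge> k" and Aa: "A \<nu> \<le> ennreal C"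
        have "ennreal (integral\<^sup>L (Pn \<nu>) (FF h k)) = (\<integral>\<^sup>+ \<xi>. ennreal (FF h k \<xi>) \<partial>Pn \<nu>)"
          using nn[OF Pn_prob Pn_sets] by simp
        also have "\<dots> \<le> A \<nu>" unfolding A_def by (intro nn_integral_mono FF_le_h[OF nu])
        also have "\<dots> \<le> ennreal C" by (rule Aa)
        finally show "integral\<^sup>L (Pn \<nu>) (FF h k) \<le> C" using C_nonneg by simp
      qed
    qed
    have "integral\<^sup>L P (FF h k) \<le> C"
    proof (rule ccontr)
      assume "\<not> ?thesis"
      then have "C < integral\<^sup>L P (FF h k)" by simp
      from order_tendstoD(1)[OF lim this]
      have "eventually (\<lambda>\<nu>. C < integral\<^sup>L (Pn \<nu>) (FF h k)) sequentially" .
      from frequently_eventually_conj[OF freq2 this]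
      have "frequently (\<lambda>\<nu>. False) sequentially"
        by (rule frequently_elim1) linarith
      then show False by simp
    qed
    then show ?thesis using nn[OF P_prob P_sets] C_nonneg by simp
  qed
  have pw: "e2ennreal (epi_liminf h \<xi>) \<le> liminf (\<lambda>k. ennreal (FF h k \<xi>))" for \<xi>
    unfolding le_Liminf_iff
  proof (intro allI impI)
    fix y assume y: "y < e2ennreal (epi_liminf h \<xi>)"
    then obtain r where r: "0 \<le> r" "y = ennreal r"
      by (cases y) auto
    have "ereal r < epi_liminf h \<xi>"
    proof (rule ccontr)
      assume "\<not> ?thesis"
      then have "e2ennreal (epi_liminf h \<xi>) \<le> e2ennreal (ereal r)"
        by (intro e2ennreal_mono) simp
      then show False using y r by simp
    qed
    then obtain a where a: "ereal r < ereal a" "ereal a < epi_liminf h \<xi>"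
      using ereal_dense2 by blast
    then have ra: "r < a" by simp
    then have a0: "0 < a" using r by simp
    obtain \<delta> N0 where d: "\<delta> > 0" and dN: "\<forall>\<nu>\<ge>N0. \<forall>\<zeta>. dist \<zeta> \<xi> < \<delta> \<longrightarrow> ereal a < h \<nu> \<zeta>"
      using epi_liminf_gt[OF a(2)] by blast
    have "eventually (\<lambda>k. k \<ge> max N0 (max (nat \<lceil>a\<rceil>) (nat \<lceil>a / \<delta>\<rceil>))) sequentially"
      by (rule eventually_ge_at_top)
    then show "eventually (\<lambda>k. y < ennreal (FF h k \<xi>)) sequentially"
    proof (rule eventually_mono)
      fix k assume k: "k \<ge> max N0 (max (nat \<lceil>a\<rceil>) (nat \<lceil>a / \<delta>\<rceil>))"
      have ak: "a \<le> real k" using k by linarith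
      have "a / \<delta> \<le> real k" using k by linarith
      then have akd: "a \<le> real k * \<delta>" using d by (simp add: divide_le_eq mult.commute)
      have "a \<le> FF h k \<xi>"
        using a0 ak akd dN k by (intro FF_ge[where \<delta>=\<delta>]) auto
      then show "y < ennreal (FF h k \<xi>)" using r ra by (simp add: ennreal_less_iff)
    qed
  qed
  have FFme: "(\<lambda>\<xi>. ennreal (FF h k \<xi>)) \<in> borel_measurable P" for k
    unfolding measurable_cong_sets[OF P_sets refl] using FFm[of k] by measurable
  have "(\<integral>\<^sup>+ \<xi>. e2ennreal (epi_liminf h \<xi>) \<partial>P) \<le> (\<integral>\<^sup>+ \<xi>. liminf (\<lambda>k. ennreal (FF h k \<xi>)) \<partial>P)"
    by (intro nn_integral_mono pw)
  also have "\<dots> \<le> liminf (\<lambda>k. \<integral>\<^sup>+ \<xi>. ennreal (FF h k \<xi>) \<partial>P)"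
    by (rule nn_integral_liminf[OF FFme])
  also have "\<dots> \<le> ennreal C"
    using FFk by (intro Liminf_le) auto
  finally have fin: "(\<integral>\<^sup>+ \<xi>. e2ennreal (epi_liminf h \<xi>) \<partial>P) \<le> ennreal C" .
  have eqmax: "e2ennreal (max (epi_liminf h \<xi>) 0) = e2ennreal (epi_liminf h \<xi>)" for \<xi>
    by (simp add: e2ennreal_def max.commute)
  have zero: "e2ennreal (- max (epi_liminf h \<xi>) 0) = 0" for \<xi>
    by (rule e2ennreal_neg) simp
  have lt: "(\<integral>\<^sup>+ \<xi>. e2ennreal (epi_liminf h \<xi>) \<partial>P) < top"
    using fin by (simp add: le_less_trans)
  then obtain ra where ra: "0 \<le> ra" "(\<integral>\<^sup>+ \<xi>. e2ennreal (epi_liminf h \<xi>) \<partial>P) = ennreal ra"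
    by (cases "(\<integral>\<^sup>+ \<xi>. e2ennreal (epi_liminf h \<xi>) \<partial>P)") auto
  have "ext_expect P (\<lambda>\<xi>. max (epi_liminf h \<xi>) 0) = ereal ra"
    unfolding ext_expect_def Let_def eqmax zero using ra by (simp add: zero_ennreal.rep_eq)
  then show ?thesis by simp
qed

end
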